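(* Let $\mathcal U\in\mathrm{Ch}(A'B',AB)$ be a two-qubit unitary channel ($|A'|=|B'|=|A|=|B|=2$) with Choi state $\Phi^{\mathcal U}_{R_AAR_BB}$. Then the state \[ \rho_{R_BB}:=\frac{\sqrt{\Phi^{\mathcal U}_{R_BB}}}{\operatorname{tr}\sqrt{\Phi^{\mathcal U}_{R_BB}}} \] is the Choi state of a unital qubit channel from $B'$ to $B$; that is, $\operatorname{tr}_B\rho_{R_BB}=\mathbb 1_{R_B}/2$ and $\operatorname{tr}_{R_B}\rho_{R_BB}=\mathbb 1_B/2$.
   Context: Maximally entangled state $\Phi_{RX}:=\frac1{|X|}\sum_{i,j}|ii\rangle\langle jj|$; Choi state of a bipartite channel $\mathcal N$ from $A'B'$ to $AB$: $\Phi^{\mathcal N}_{R_AAR_BB}:=(\mathrm{id}_{R_AR_B}\otimes\mathcal N)(\Phi_{R_AA'}\otimes\Phi_{R_BB'})$ with $R_A\simeq A'$, $R_B\simeq B'$; $\Phi^{\mathcal U}_{R_BB}$ denotes its marginal on $R_BB$. *)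

theory Defs
  imports "HOL-Analysis.Analysis"
begin

text \<open>Operators on a finite-dimensional system with basis indexed by a finite type 'x are
  complex matrices of type complex^'x^'x. Composite systems use product index types.
  A qubit has index type 2.\<close>

type_synonym 'x op = "complex^'x^'x"

definition qadj :: "complex^'n^'m \<Rightarrow> complex^'m^'n" where
  "qadj M = (\<chi> i j. cnj (M $ j $ i))"

definition qunitary :: "'n::finite op \<Rightarrow> bool" where
  "qunitary U \<longleftrightarrow> U ** qadj U = mat 1 \<and> qadj U ** U = mat 1"

definition qtrace :: "'n::finite op \<Rightarrow> complex" where
  "qtrace M = (\<Sum>i\<in>UNIV. M $ i $ i)"

definition qpsd :: "'n::finite op \<Rightarrow> bool" where
  "qpsd M \<longleftrightarrow> (\<forall>x::complex^'n. \<exists>r::real. r \<ge> 0 \<and>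
      (\<Sum>i\<in>UNIV. cnj (x $ i) * (M *v x) $ i) = complex_of_real r)"

definition qsqrt :: "'n::finite op \<Rightarrow> 'n op" where
  "qsqrt M = (THE S. qpsd S \<and> S ** S = M)"

definition ptrace1 :: "('a::finite \<times> 'b::finite) op \<Rightarrow> 'b op" where
  "ptrace1 M = (\<chi> j j'. \<Sum>i\<in>UNIV. M $ (i, j) $ (i, j'))"

definition ptrace2 :: "('a::finite \<times> 'b::finite) op \<Rightarrow> 'a op" where
  "ptrace2 M = (\<chi> i i'. \<Sum>j\<in>UNIV. M $ (i, j) $ (i', j))"

definition ketbra :: "'n::finite \<Rightarrow> 'n \<Rightarrow> 'n op" where
  "ketbra i j = (\<chi> k l. if k = i \<and> l = j then 1 else 0)"

definition unitary_channel :: "'n::finite op \<Rightarrow> 'n op \<Rightarrow> 'n op" where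
  "unitary_channel U \<rho> = U ** \<rho> ** qadj U"

text \<open>Choi state of a bipartite channel N from A'B' to AB, on systems R_A A R_B B
  (index ((r_A, a), (r_B, b))), with R_A \<simeq> A', R_B \<simeq> B':
  (id_{R_A R_B} \<otimes> N)(\<Phi>_{R_A A'} \<otimes> \<Phi>_{R_B B'}), where
  \<Phi>_{RX} = 1/|X| \<Sum>_{i,j} |ii><jj|.  Written out:
  1/(|A'||B'|) \<Sum>_{i,i',j,j'} |i j><i' j'|_{R_A R_B} \<otimes> N(|i j><i' j'|_{A'B'}),
  with the tensor factors reordered to R_A A R_B B.\<close>
definition choi_bip ::
  "(('ai::finite \<times> 'bi::finite) op \<Rightarrow> ('ao::finite \<times> 'bo::finite) op)
     \<Rightarrow> (('ai \<times> 'ao) \<times> ('bi \<times> 'bo)) op" where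
  "choi_bip N = (\<chi> p q.
      (1 / (of_nat CARD('ai) * of_nat CARD('bi))) *
      N (ketbra (fst (fst p), fst (snd p)) (fst (fst q), fst (snd q)))
        $ (snd (fst p), snd (snd p)) $ (snd (fst q), snd (snd q)))"

end

theory Submission
  imports Defs
begin
definition cin :: "complex^'n::finite \<Rightarrow> complex^'n \<Rightarrow> complex" where
  "cin x y = (\<Sum>i\<in>UNIV. cnj (x$i) * y$i)"

lemma cin_add_right: "cin x (y + z) = cin x y + cin x z"
  by (simp add: cin_def distrib_left sum.distrib)
lemma cin_add_left: "cin (x + y) z = cin x z + cin y z"
  by (simp add: cin_def distrib_right sum.distrib)
lemma cin_diff_right: "cin x (y - z) = cin x y - cin x z"
  by (simp add: cin_def right_diff_distrib sum_subtractf)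
lemma cin_diff_left: "cin (x - y) z = cin x z - cin y z"
  by (simp add: cin_def left_diff_distrib sum_subtractf)
lemma cin_smult_right: "cin x (c *s y) = c * cin x y"
  by (simp add: cin_def sum_distrib_left vector_scalar_mult_def mult_ac)
lemma cin_smult_left: "cin (c *s x) y = cnj c * cin x y"
  by (simp add: cin_def sum_distrib_left vector_scalar_mult_def mult_ac)
lemma cin_scaleR_right: "cin x (r *\<^sub>R y) = of_real r * cin x y"
  by (simp add: cin_def sum_distrib_left scaleR_vec_def scaleR_conv_of_real mult_ac)
lemma cin_scaleR_left: "cin (r *\<^sub>R x) y = of_real r * cin x y"
  by (simp add: cin_def sum_distrib_left scaleR_vec_def scaleR_conv_of_real mult_ac)
lemma cin_zero_left[simp]: "cin 0 y = 0" by (simp add: cin_def)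
lemma cin_zero_right[simp]: "cin x 0 = 0" by (simp add: cin_def)
lemma cin_commute: "cin y x = cnj (cin x y)"
  by (simp add: cin_def mult.commute)
lemma cin_self: "cin x x = of_real ((norm x)^2)"
proof -
  have "(norm x)^2 = (\<Sum>i\<in>UNIV. (cmod (x$i))^2)"
    by (simp add: norm_vec_def L2_set_def sum_nonneg)
  moreover have "cnj z * z = of_real ((cmod z)^2)" for z
    by (simp only: complex_norm_square mult.commute)
  ultimately show ?thesis
    by (simp add: cin_def)
qed
lemma mult_cnj_sq: "z * cnj z = (complex_of_real (cmod z))^2"
  by (metis complex_norm_square of_real_power)

lemma cin_self_eq_0: "cin x x = 0 \<longleftrightarrow> x = 0"
  by (simp add: cin_self)
lemma cin_adj: "cin x (A *v y) = cin (qadj A *v x) y"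
proof -
  have 1: "cin x (A *v y) = (\<Sum>i\<in>UNIV. \<Sum>j\<in>UNIV. cnj (x$i) * A$i$j * y$j)"
    by (simp add: cin_def matrix_vector_mult_def sum_distrib_left mult.assoc)
  have 2: "cin (qadj A *v x) y = (\<Sum>j\<in>UNIV. \<Sum>i\<in>UNIV. cnj (x$i) * A$i$j * y$j)"
    by (simp add: cin_def matrix_vector_mult_def qadj_def sum_distrib_right sum_distrib_left mult.commute mult.left_commute)
  show ?thesis unfolding 1 2 by (rule sum.swap)
qed
lemma qadj_qadj[simp]: "qadj (qadj A) = A"
  by (simp add: qadj_def vec_eq_iff)
lemma cin_sum_right: "cin x (sum f B) = (\<Sum>b\<in>B. cin x (f b))"
  by (simp add: cin_def sum_distrib_left sum.swap[of _ UNIV B])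
lemma cin_sum_left: "cin (sum f B) x = (\<Sum>b\<in>B. cin (f b) x)"
  by (simp add: cin_def sum_distrib_right cnj_sum sum.swap[of _ UNIV B])
lemma matvec_sum: "A *v (sum f B) = (\<Sum>b\<in>B. A *v f b)"
  by (simp add: vec_eq_iff matrix_vector_mult_def sum_distrib_left sum.swap[of _ UNIV B])
lemma matvec_smult: "A *v (c *s x) = c *s (A *v (x::complex^'n::finite))"
  by (rule vector_scalar_commute)
lemma matvec_scaleR: "A *v (r *\<^sub>R x) = r *\<^sub>R (A *v (x::complex^'n::finite))"
  by (simp add: vec_eq_iff matrix_vector_mult_def scaleR_vec_def sum_distrib_left scaleR_conv_of_real mult_ac)
lemma mat_matvec: "mat c *v x = c *s (x::complex^'n::finite)"
proof -
  have "(\<Sum>j\<in>UNIV. (if i = j then c else 0) * x $ j) = c * x $ i" for i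
  proof -
    have "(\<Sum>j\<in>UNIV. (if i = j then c else 0) * x $ j) = (\<Sum>j\<in>UNIV. if i = j then c * x $ j else 0)"
      by (rule sum.cong) auto
    then show ?thesis by simp
  qed
  then show ?thesis by (simp add: vec_eq_iff matrix_vector_mult_def mat_def vector_scalar_mult_def)
qed
lemma matvec_diff_mat: "(A - B) *v x = A *v x - B *v (x::complex^'n::finite)"
  by (simp add: vec_eq_iff matrix_vector_mult_def sum_subtractf left_diff_distrib)
lemma qadj_diff: "qadj (A - B) = qadj A - qadj B"
  by (simp add: qadj_def vec_eq_iff)
lemma qadj_mat: "qadj (mat c :: complex^'n::finite^'n) = mat (cnj c)"
  by (simp add: qadj_def vec_eq_iff mat_def)

definition herm :: "complex^'n::finite^'n \<Rightarrow> bool" where "herm A \<longleftrightarrow> qadj A = A"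

lemma herm_cin: "herm A \<Longrightarrow> cin x (A *v y) = cin (A *v x) y"
  by (metis cin_adj herm_def)

lemma herm_real: "herm A \<Longrightarrow> cnj (cin x (A *v x)) = cin x (A *v x)"
  by (metis cin_commute herm_cin)

lemma zero_form: assumes "\<And>x. cin x (D *v x) = 0" shows "D = (0::complex^'n::finite^'n)"
proof -
  have e: "cin x (D *v y) = 0" for x y
  proof -
    have 1: "cin x (D *v y) + cin y (D *v x) = 0"
      using assms[of "x + y"] assms[of x] assms[of y]
      by (simp add: cin_add_left cin_add_right matrix_vector_right_distrib) (metis add.commute)
    have 2: "cin x (D *v y) - cin y (D *v x) = 0"
      using assms[of "x + \<i> *s y"] assms[of x] assms[of y]
      by (simp add: cin_add_left cin_add_right matrix_vector_right_distrib cin_smult_left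
         cin_smult_right matvec_smult algebra_simps)
    from 1 2 show ?thesis by (simp add: algebra_simps)
  qed
  show ?thesis
    unfolding matrix_eq
  proof
    fix x
    have "D *v x = 0" using e[of "D *v x" x] by (simp add: cin_self_eq_0)
    then show "D *v x = 0 *v x" by (simp add: matrix_vector_mult_def vec_eq_iff)
  qed
qed

lemma qpsd_cin: "qpsd M \<Longrightarrow> \<exists>r\<ge>0. cin x (M *v x) = of_real r"
  unfolding qpsd_def cin_def by blast

lemma qpsd_Re: "qpsd M \<Longrightarrow> 0 \<le> Re (cin x (M *v x))"
proof -
  assume "qpsd M"
  then obtain r where "r \<ge> 0" "cin x (M *v x) = of_real r" using qpsd_cin by blast
  then show ?thesis by simp
qed

lemma qpsd_herm: assumes "qpsd M" shows "herm M"
proof -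
  have "cin x ((M - qadj M) *v x) = 0" for x
  proof -
    obtain r where "cin x (M *v x) = of_real r" using qpsd_cin[OF assms] by blast
    moreover have "cin x (qadj M *v x) = cnj (cin x (M *v x))"
      by (metis cin_adj cin_commute qadj_qadj)
    ultimately show ?thesis by (simp add: matvec_diff_mat cin_diff_right)
  qed
  then have "M - qadj M = 0" by (rule zero_form)
  then show ?thesis unfolding herm_def by simp
qed

lemma form_zero:
  fixes A :: "complex^'n::finite^'n"
  assumes h: "herm A"
    and pos: "\<And>t::real. 0 \<le> Re (cin (v + t *\<^sub>R w) (A *v (v + t *\<^sub>R w)))"
    and zero: "Re (cin v (A *v v)) = 0"
  shows "Re (cin w (A *v v)) = 0"
proof -
  define a where "a = Re (cin w (A *v w))"
  define b where "b = Re (cin w (A *v v))"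
  have cvw: "cin v (A *v w) = cnj (cin w (A *v v))"
    by (metis cin_commute h herm_cin)
  have q: "0 \<le> 2*t*b + t^2*a" for t
    using pos[of t] zero
    by (simp add: a_def b_def cin_add_left cin_add_right matrix_vector_right_distrib
        cin_scaleR_left cin_scaleR_right matvec_scaleR cvw power2_eq_square algebra_simps)
  have a0: "0 \<le> a" using q[of 1] q[of "-1"] by simp
  define c where "c = a + 1"
  have c0: "c > 0" using a0 c_def by simp
  have "0 \<le> 2*(-b/c)*b + (-b/c)^2*a" by (rule q)
  then have "0 \<le> (2*(-b/c)*b + (-b/c)^2*a) * c^2" using c0 by simp
  also have "\<dots> = b^2 * (a - 2*c)" using c0 by (simp add: field_simps power2_eq_square)
  finally have "0 \<le> b^2 * (a - 2*c)" .
  moreover have "a - 2*c < 0" using a0 c_def by simp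
  ultimately have "b^2 \<le> 0" by (simp add: mult_le_0_iff zero_le_mult_iff)
  then show ?thesis unfolding b_def by simp
qed

lemma form_zero_c:
  fixes A :: "complex^'n::finite^'n"
  assumes h: "herm A"
    and pos: "\<And>t::real. 0 \<le> Re (cin (v + t *\<^sub>R w) (A *v (v + t *\<^sub>R w)))"
    and pos2: "\<And>t::real. 0 \<le> Re (cin (v + t *\<^sub>R (\<i> *s w)) (A *v (v + t *\<^sub>R (\<i> *s w))))"
    and zero: "Re (cin v (A *v v)) = 0"
  shows "cin w (A *v v) = 0"
proof -
  have 1: "Re (cin w (A *v v)) = 0" by (rule form_zero[OF h pos zero])
  have "Re (cin (\<i> *s w) (A *v v)) = 0" by (rule form_zero[OF h pos2 zero])
  then have 2: "Im (cin w (A *v v)) = 0" by (simp add: cin_smult_left)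
  from 1 2 show ?thesis by (simp add: complex_eq_iff)
qed

lemma qpsd_zero: assumes "qpsd M" "cin x (M *v x) = 0" shows "M *v x = 0"
proof -
  have h: "herm M" by (rule qpsd_herm[OF assms(1)])
  have "cin (M *v x) (M *v x) = 0"
    by (rule form_zero_c[OF h]) (use assms qpsd_Re in auto)
  then show ?thesis by (simp add: cin_self_eq_0)
qed
lemma qpsd_iff: "qpsd M \<longleftrightarrow> (\<forall>x. \<exists>r\<ge>0. cin x (M *v x) = of_real r)"
  by (simp add: qpsd_def cin_def)

lemma smult_smult: "c *s (d *s x) = (c * d) *s (x::complex^'n::finite)"
  by (simp add: vec_eq_iff vector_scalar_mult_def)

lemma inner_cin: "inner x y = Re (cin x (y::complex^'n::finite))"
  by (simp add: inner_vec_def cin_def inner_complex_def)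

definition oe :: "complex^'n::finite^'n \<Rightarrow> (complex^'n) set \<Rightarrow> bool" where
  "oe H B \<longleftrightarrow> finite B \<and> (\<forall>b\<in>B. cin b b = 1) \<and> (\<forall>b\<in>B. \<forall>c\<in>B. b \<noteq> c \<longrightarrow> cin b c = 0)
     \<and> (\<forall>b\<in>B. \<exists>m. H *v b = m *s b)"

lemma oe_fin: "oe H B \<Longrightarrow> finite B" unfolding oe_def by blast
lemma oe_one: "oe H B \<Longrightarrow> b \<in> B \<Longrightarrow> cin b b = 1" unfolding oe_def by blast
lemma oe_orth: "oe H B \<Longrightarrow> b \<in> B \<Longrightarrow> c \<in> B \<Longrightarrow> b \<noteq> c \<Longrightarrow> cin b c = 0"
  unfolding oe_def by blast
lemma oe_eig: "oe H B \<Longrightarrow> b \<in> B \<Longrightarrow> \<exists>m. H *v b = m *s b" unfolding oe_def by blast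

lemma oe_card: fixes B :: "(complex^'n::finite) set" assumes "oe H B" shows "card B \<le> DIM(complex^'n::finite)"
proof -
  have "pairwise orthogonal B"
    unfolding pairwise_def orthogonal_def inner_cin using oe_orth[OF assms] by simp
  moreover have "(0::complex^'n) \<notin> B"
  proof
    assume "(0::complex^'n) \<in> B"
    then have "cin (0::complex^'n) 0 = 1" by (rule oe_one[OF assms])
    then show False by simp
  qed
  ultimately have ind: "independent B" by (rule pairwise_orthogonal_independent)
  show ?thesis by (rule conjunct2[OF independent_bound[OF ind]])
qed

lemma cont_nth: "continuous_on S (\<lambda>x::complex^'n::finite. x $ i)"
  by (simp add: linear_continuous_on bounded_linear_vec_nth)

lemma cont_cin: "continuous_on S (\<lambda>x::complex^'n::finite. cin b x)"
  unfolding cin_def by (intro continuous_intros cont_nth)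

lemma cont_quad: "continuous_on S (\<lambda>x::complex^'n::finite. Re (cin x (H *v x)))"
  unfolding cin_def matrix_vector_mult_def by (simp; intro continuous_intros cont_nth)

lemma oe_extend:
  fixes H :: "complex^'n::finite^'n"
  assumes h: "herm H" and oe: "oe H B" and x0: "\<forall>b\<in>B. cin b x0 = 0" "x0 \<noteq> 0"
  shows "\<exists>v. v \<notin> B \<and> oe H (insert v B)"
proof -
  define W where "W = {x. \<forall>b\<in>B. cin b x = 0}"
  define S where "S = sphere (0::complex^'n) 1 \<inter> W"
  define f where "f x = Re (cin x (H *v x))" for x
  have Wadd: "x + y \<in> W" if "x \<in> W" "y \<in> W" for x y
    using that by (simp add: W_def cin_add_right)
  have WR: "r *\<^sub>R x \<in> W" if "x \<in> W" for x r
    using that by (simp add: W_def cin_scaleR_right)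
  have Wi: "\<i> *s x \<in> W" if "x \<in> W" for x
    using that by (simp add: W_def cin_smult_right)
  have "closed W"
  proof -
    have "W = (\<Inter>b\<in>B. {x. cin b x = 0})" by (auto simp: W_def)
    moreover have "closed {x. cin b x = 0}" for b
      by (rule closed_Collect_eq) (auto intro: cont_cin)
    ultimately show ?thesis by auto
  qed
  then have cS: "compact S" unfolding S_def by (intro compact_Int_closed) auto
  have normx: "norm x = 1 \<longleftrightarrow> cin x x = 1" for x::"complex^'n"
  proof -
    have "cin x x = 1 \<longleftrightarrow> (norm x)^2 = 1" unfolding cin_self of_real_eq_1_iff ..
    then show ?thesis using norm_ge_zero[of x] by (auto simp: power2_eq_1_iff)
  qed
  define v0 where "v0 = (1 / norm x0) *\<^sub>R x0"
  have "v0 \<in> S" using x0 unfolding S_def v0_def by (auto simp: W_def cin_scaleR_right)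
  then have "S \<noteq> {}" by auto
  then obtain v where vS: "v \<in> S" and vmax: "\<forall>y\<in>S. f y \<le> f v"
    using continuous_attains_sup[OF cS _ cont_quad[of S H]] unfolding f_def by blast
  define lam where "lam = f v"
  have vW: "v \<in> W" and nv: "norm v = 1" using vS by (auto simp: S_def)
  have fscale: "f (r *\<^sub>R x) = r^2 * f x" for r x
    by (simp add: f_def cin_scaleR_left cin_scaleR_right matvec_scaleR power2_eq_square)
  have bound: "f x \<le> lam * (norm x)^2" if "x \<in> W" for x
  proof (cases "x = 0")
    case True then show ?thesis by (simp add: f_def)
  next
    case False
    define y where "y = (1 / norm x) *\<^sub>R x"
    have "y \<in> S" using False that unfolding S_def y_def by (auto intro!: WR)
    then have "f y \<le> lam" using vmax lam_def by auto
    moreover have "f y = f x / (norm x)^2" unfolding y_def fscale by (simp add: power_divide)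
    ultimately show ?thesis using False by (simp add: divide_le_eq mult.commute)
  qed
  define A where "A = mat (of_real lam) - H"
  have hA: "herm A" using h unfolding A_def herm_def by (simp add: qadj_diff qadj_mat)
  have Ax: "A *v x = of_real lam *s x - H *v x" for x
    unfolding A_def by (simp add: matvec_diff_mat mat_matvec)
  have ReA: "Re (cin x (A *v x)) = lam * (norm x)^2 - f x" for x
    by (simp add: Ax cin_diff_right cin_smult_right cin_self f_def)
  have posA: "0 \<le> Re (cin x (A *v x))" if "x \<in> W" for x
    using bound[OF that] ReA[of x] by simp
  have zero: "Re (cin v (A *v v)) = 0" using ReA[of v] nv lam_def by simp
  have orth: "cin w (A *v v) = 0" if "w \<in> W" for w
    by (rule form_zero_c[OF hA]) (auto intro!: posA Wadd WR Wi vW that simp: zero)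
  have "A *v v \<in> W"
    unfolding W_def mem_Collect_eq
  proof (intro ballI)
    fix b assume b: "b \<in> B"
    obtain m where Hb: "H *v b = m *s b" using oe_eig[OF oe b] by blast
    have "cin b (H *v v) = cin (H *v b) v" by (rule herm_cin[OF h])
    also have "\<dots> = 0" using vW b by (subst Hb) (simp add: cin_smult_left W_def)
    finally show "cin b (A *v v) = 0" using vW b by (simp add: Ax cin_diff_right cin_smult_right W_def)
  qed
  then have "cin (A *v v) (A *v v) = 0" by (rule orth)
  then have "A *v v = 0" by (simp add: cin_self_eq_0)
  then have Hv: "H *v v = of_real lam *s v" by (simp add: Ax)
  have cvv: "cin v v = 1" using nv normx by blast
  have vB: "v \<notin> B" using vW cvv by (auto simp: W_def)
  have "oe H (insert v B)"
    unfolding oe_def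
  proof (intro conjI ballI impI)
    show "finite (insert v B)" using oe_fin[OF oe] by simp
    show "cin b b = 1" if "b \<in> insert v B" for b using that cvv oe_one[OF oe] by auto
    show "\<exists>m. H *v b = m *s b" if "b \<in> insert v B" for b using that Hv oe_eig[OF oe] by auto
    show "cin b c = 0" if "b \<in> insert v B" "c \<in> insert v B" "b \<noteq> c" for b c
    proof -
      have vb: "cin b v = 0" "cin v b = 0" if "b \<in> B" for b
        using vW that by (auto simp: W_def cin_commute[of v])
      show ?thesis using that oe_orth[OF oe] vb by auto
    qed
  qed
  with vB show ?thesis by blast
qed

lemma spectral:
  fixes H :: "complex^'n::finite^'n"
  assumes h: "herm H"
  shows "\<exists>B. oe H B \<and> (\<forall>x. (\<forall>b\<in>B. cin b x = 0) \<longrightarrow> x = 0)"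
proof -
  have "oe H {}" by (simp add: oe_def)
  moreover have "\<forall>B. oe H B \<longrightarrow> card B < DIM(complex^'n) + 1"
  proof (intro allI impI)
    fix B :: "(complex^'n) set" assume "oe H B"
    then have "card B \<le> DIM(complex^'n)" by (rule oe_card)
    then show "card B < DIM(complex^'n) + 1" by simp
  qed
  ultimately obtain B where B: "oe H B" and Bmax: "\<forall>C. oe H C \<longrightarrow> card C \<le> card B"
    using ex_has_greatest_nat[of "oe H" "{}" card] by blast
  have "x = 0" if x0: "\<forall>b\<in>B. cin b x = 0" for x
  proof (rule ccontr)
    assume "x \<noteq> 0"
    then obtain v where "v \<notin> B" "oe H (insert v B)" using oe_extend[OF h B x0] by blast
    moreover have "finite B" using oe_fin[OF B] by blast
    ultimately show False using Bmax by fastforce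
  qed
  with B show ?thesis by blast
qed

lemma oe_expand:
  assumes oe: "oe H B" and comp: "\<forall>x. (\<forall>b\<in>B. cin b x = 0) \<longrightarrow> x = 0"
  shows "x = (\<Sum>b\<in>B. cin b x *s b)"
proof -
  have fin: "finite B" using oe_fin[OF oe] by blast
  have "cin c (x - (\<Sum>b\<in>B. cin b x *s b)) = 0" if c: "c \<in> B" for c
  proof -
    have "(\<Sum>b\<in>B. cin c (cin b x *s b)) = (\<Sum>b\<in>B. if b = c then cin c x else 0)"
      using oe_one[OF oe c] oe_orth[OF oe c] by (intro sum.cong) (auto simp: cin_smult_right)
    also have "\<dots> = cin c x" using fin c by simp
    finally show ?thesis by (simp add: cin_diff_right cin_sum_right)
  qed
  then have "x - (\<Sum>b\<in>B. cin b x *s b) = 0" using comp by blast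
  then show ?thesis by simp
qed

lemma smult_sum: "(\<Sum>b\<in>B. f b *s (v b)) = (\<Sum>b\<in>B. f b *s v b)" by simp

lemma matvec_expand:
  assumes "oe H B" "\<forall>x. (\<forall>b\<in>B. cin b x = 0) \<longrightarrow> x = 0"
  shows "T *v x = (\<Sum>b\<in>B. cin b x *s (T *v b))"
proof -
  have "T *v x = T *v (\<Sum>b\<in>B. cin b x *s b)" using oe_expand[OF assms] by metis
  also have "\<dots> = (\<Sum>b\<in>B. cin b x *s (T *v b))" by (simp add: matvec_sum matvec_smult)
  finally show ?thesis .
qed

lemma sqrt_unique:
  fixes M :: "complex^'n::finite^'n"
  assumes M: "qpsd M"
  shows "\<exists>!S. qpsd S \<and> S ** S = M"
proof -
  have h: "herm M" by (rule qpsd_herm[OF M])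
  obtain B where oe: "oe H B" and comp: "\<forall>x. (\<forall>b\<in>B. cin b x = 0) \<longrightarrow> x = 0" if "H = M" for H
    using spectral[OF h] by blast
  note oe = oe[OF refl] and comp = comp[OF refl]
  have fin: "finite B" using oe_fin[OF oe] by blast
  have cbb: "b \<in> B \<Longrightarrow> cin b b = 1" for b using oe_one[OF oe] by blast
  have cbc: "b \<in> B \<Longrightarrow> c \<in> B \<Longrightarrow> b \<noteq> c \<Longrightarrow> cin b c = 0" for b c using oe_orth[OF oe] by blast
  define mu where "mu b = Re (cin b (M *v b))" for b
  have mu0: "mu b \<ge> 0" for b using qpsd_Re[OF M] mu_def by simp
  have Mb: "M *v b = of_real (mu b) *s b" if bB: "b \<in> B" for b
  proof -
    obtain r where r: "cin b (M *v b) = of_real r" using qpsd_cin[OF M] by blast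
    obtain m where m: "M *v b = m *s b" using oe_eig[OF oe bB] by blast
    have "cin b (M *v b) = m" using m cbb[OF bB] by (simp add: cin_smult_right)
    then have "m = of_real (mu b)" using r by (auto simp: mu_def)
    then show ?thesis using m by simp
  qed
  define sq where "sq b = complex_of_real (sqrt (mu b))" for b
  have sq2: "sq b * sq b = of_real (mu b)" for b
    using mu0[of b] by (simp add: sq_def flip: of_real_mult)
  define S where "S = (\<chi> i j. \<Sum>b\<in>B. sq b * b$i * cnj (b$j))"
  have Sx: "S *v x = (\<Sum>b\<in>B. (sq b * cin b x) *s b)" for x
    by (simp add: S_def vec_eq_iff matrix_vector_mult_def vector_scalar_mult_def cin_def
        sum_distrib_left sum_distrib_right sum.swap[of _ B UNIV] mult_ac)
  have sumdelta: "(\<Sum>b\<in>B. f b * cin b c) = f c" if "c \<in> B" for f c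
  proof -
    have "(\<Sum>b\<in>B. f b * cin b c) = (\<Sum>b\<in>B. if b = c then f c else 0)"
      using that by (intro sum.cong) (auto simp: cbb cbc)
    then show ?thesis using fin that by simp
  qed
  have Sb: "S *v c = sq c *s c" if "c \<in> B" for c
  proof -
    have "S *v c = (\<Sum>b\<in>B. cin b c *s (S *v b))" by (rule matvec_expand[OF oe comp])
    have "(S *v c) $ i = (sq c *s c) $ i" for i
    proof -
      have "(S *v c) $ i = (\<Sum>b\<in>B. (sq b * b $ i) * cin b c)"
        by (simp add: Sx vector_scalar_mult_def mult_ac)
      also have "\<dots> = sq c * c $ i" by (rule sumdelta[OF that])
      finally show ?thesis by (simp add: vector_scalar_mult_def)
    qed
    then show ?thesis by (simp add: vec_eq_iff)
  qed
  have Mx: "M *v x = (\<Sum>b\<in>B. cin b x *s (of_real (mu b) *s b))" for x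
    using matvec_expand[OF oe comp, of M x] Mb by (simp cong: sum.cong)
  have psdS: "qpsd S"
    unfolding qpsd_iff
  proof
    fix x
    have "cin x (S *v x) = (\<Sum>b\<in>B. sq b * (cin b x * cnj (cin b x)))"
      by (simp add: Sx cin_sum_right cin_smult_right cin_commute[of x] mult_ac)
    also have "\<dots> = of_real (\<Sum>b\<in>B. sqrt (mu b) * (cmod (cin b x))^2)"
      by (simp add: sq_def mult_cnj_sq)
    finally have "cin x (S *v x) = of_real (\<Sum>b\<in>B. sqrt (mu b) * (cmod (cin b x))^2)" .
    moreover have "0 \<le> (\<Sum>b\<in>B. sqrt (mu b) * (cmod (cin b x))^2)"
      using mu0 by (intro sum_nonneg) simp
    ultimately show "\<exists>r\<ge>0. cin x (S *v x) = complex_of_real r" by blast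
  qed
  have SS: "S ** S = M"
    unfolding matrix_eq
  proof
    fix x
    have "(S ** S) *v x = S *v (S *v x)" by (simp add: matrix_vector_mul_assoc)
    also have "\<dots> = (\<Sum>b\<in>B. cin b (S *v x) *s (S *v b))" by (rule matvec_expand[OF oe comp])
    also have "\<dots> = (\<Sum>b\<in>B. cin b x *s (of_real (mu b) *s b))"
    proof (rule sum.cong[OF refl])
      fix b assume b: "b \<in> B"
      have "cin b (S *v x) = cin (S *v b) x"
        using qpsd_herm[OF psdS] by (simp add: herm_cin)
      also have "\<dots> = cnj (sq b) * cin b x" by (simp add: Sb b cin_smult_left)
      finally show "cin b (S *v x) *s (S *v b) = cin b x *s (of_real (mu b) *s b)"
        by (simp add: Sb b smult_smult sq_def mult_ac flip: sq2[unfolded sq_def])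
    qed
    also have "\<dots> = M *v x" by (simp add: Mx)
    finally show "(S ** S) *v x = M *v x" .
  qed
  have uniq: "T = S" if T: "qpsd T" "T ** T = M" for T
  proof -
    have hT: "herm T" by (rule qpsd_herm[OF T(1)])
    have Tb: "T *v b = sq b *s b" if b: "b \<in> B" for b
    proof -
      have TT: "T *v (T *v b) = (sq b * sq b) *s b"
        by (simp add: matrix_vector_mul_assoc T(2) Mb b sq2)
      show ?thesis
      proof (cases "mu b = 0")
        case True
        then have "T *v (T *v b) = 0" using TT sq2[of b] by (simp add: vec_eq_iff vector_scalar_mult_def)
        then have "cin (T *v b) (T *v b) = 0" by (simp add: herm_cin[OF hT, symmetric])
        then show ?thesis using True by (simp add: cin_self_eq_0 sq_def vec_eq_iff vector_scalar_mult_def)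
      next
        case False
        then have sp: "sqrt (mu b) > 0" using mu0[of b] by simp
        define u where "u = T *v b - sq b *s b"
        have Tu: "T *v u = T *v (T *v b) - sq b *s (T *v b)"
          by (simp only: u_def matrix_vector_mult_diff_distrib matvec_smult)
        have "T *v u + sq b *s u = 0"
          unfolding Tu TT by (simp add: u_def vec_eq_iff vector_scalar_mult_def algebra_simps)
        then have "cin u (T *v u) + sq b * cin u u = 0"
          by (metis cin_add_right cin_smult_right cin_zero_right)
        then have "Re (cin u (T *v u)) + sqrt (mu b) * (norm u)^2 = 0"
          by (metis Re_complex_of_real cin_self of_real_mult plus_complex.sel(1) sq_def zero_complex.sel(1))
        moreover have "0 \<le> Re (cin u (T *v u))" by (rule qpsd_Re[OF T(1)])
        ultimately have "sqrt (mu b) * (norm u)^2 = 0"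
          using sp by (smt (verit) mult_nonneg_nonneg zero_le_power2 less_imp_le)
        then have "u = 0" using sp by simp
        then show ?thesis by (simp add: u_def)
      qed
    qed
    show ?thesis unfolding matrix_eq
    proof
      fix x
      have "T *v x = (\<Sum>b\<in>B. cin b x *s (T *v b))" by (rule matvec_expand[OF oe comp])
      also have "\<dots> = (\<Sum>b\<in>B. cin b x *s (S *v b))" by (simp add: Tb Sb)
      also have "\<dots> = S *v x" by (rule matvec_expand[OF oe comp, symmetric])
      finally show "T *v x = S *v x" .
    qed
  qed
  show ?thesis using psdS SS uniq by blast
qed

lemma qsqrt_props:
  assumes "qpsd M"
  shows "qpsd (qsqrt M)" "qsqrt M ** qsqrt M = M"
    "\<And>T. qpsd T \<Longrightarrow> T ** T = M \<Longrightarrow> T = qsqrt M"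
proof -
  have ex: "\<exists>!S. qpsd S \<and> S ** S = M" by (rule sqrt_unique[OF assms])
  have t: "qpsd (qsqrt M) \<and> qsqrt M ** qsqrt M = M"
    unfolding qsqrt_def by (rule theI'[OF ex])
  then show "qpsd (qsqrt M)" "qsqrt M ** qsqrt M = M" by blast+
  fix T assume T: "qpsd T" "T ** T = M"
  have "(THE S. qpsd S \<and> S ** S = M) = T"
    by (rule the1_equality[OF ex]) (use T in blast)
  then show "T = qsqrt M" unfolding qsqrt_def by simp
qed

lemma two_neq: "(1::2) \<noteq> 2" by simp

lemma sum22: "sum f (UNIV::(2\<times>2) set) = f (1,1) + f (1,2) + f (2,1) + f (2,2)"
proof -
  have "sum f (UNIV::(2\<times>2) set) = (\<Sum>a\<in>UNIV. \<Sum>b\<in>UNIV. f (a,b))"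
    by (simp add: sum.cartesian_product)
  then show ?thesis by (simp add: sum_2 add.assoc)
qed

definition nx :: "2 \<Rightarrow> 2" where "nx i = (if i = 1 then 2 else 1)"
definition fl :: "2\<times>2 \<Rightarrow> 2\<times>2" where "fl p = (nx (fst p), nx (snd p))"
definition sg :: "2\<times>2 \<Rightarrow> complex" where "sg p = (if fst p = snd p then -1 else 1)"
definition th :: "(2\<times>2) op \<Rightarrow> (2\<times>2) op" where
  "th M = (\<chi> p q. sg p * sg q * M $ fl q $ fl p)"

lemma nx_simps[simp]: "nx 1 = 2" "nx 2 = 1" by (auto simp: nx_def)
lemma fl_simps[simp]: "fl (1,1) = (2,2)" "fl (1,2) = (2,1)" "fl (2,1) = (1,2)" "fl (2,2) = (1,1)"
  by (auto simp: fl_def)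
lemma sg_simps[simp]: "sg (1,1) = -1" "sg (1,2) = 1" "sg (2,1) = 1" "sg (2,2) = -1"
  by (auto simp: sg_def)

lemma all22: "(\<forall>p::2\<times>2. P p) \<longleftrightarrow> P (1,1) \<and> P (1,2) \<and> P (2,1) \<and> P (2,2)"
  unfolding split_paired_All forall_2 by blast

lemma th_mult: "th (M ** N) = th N ** th M"
  by (simp add: th_def matrix_matrix_mult_def vec_eq_iff all22 sum22 algebra_simps)

lemma th_psd: assumes "qpsd M" shows "qpsd (th M)"
  unfolding qpsd_iff
proof
  fix x :: "complex^(2\<times>2)"
  define y where "y = (\<chi> b. sg (fl b) * cnj (x $ fl b))"
  have "cin x (th M *v x) = cin y (M *v y)"
    by (simp add: y_def cin_def th_def matrix_vector_mult_def sum22 algebra_simps)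
  then show "\<exists>r\<ge>0. cin x (th M *v x) = complex_of_real r"
    using assms unfolding qpsd_iff by metis
qed

lemma th_ptrace: assumes "th M = M"
  shows "ptrace1 M = mat (qtrace M / 2) \<and> ptrace2 M = mat (qtrace M / 2)"
proof -
  have e: "M $ p $ q = sg p * sg q * M $ fl q $ fl p" for p q
  proof -
    have "M $ p $ q = th M $ p $ q" using assms by simp
    then show ?thesis by (simp add: th_def)
  qed
  have d1: "M $ (1,1) $ (1,1) = M $ (2,2) $ (2,2)" using e[of "(1,1)" "(1,1)"] by simp
  have d2: "M $ (1,2) $ (1,2) = M $ (2,1) $ (2,1)" using e[of "(1,2)" "(1,2)"] by simp
  have o1: "M $ (1,1) $ (1,2) = - M $ (2,1) $ (2,2)" using e[of "(1,1)" "(1,2)"] by simp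
  have o2: "M $ (1,2) $ (1,1) = - M $ (2,2) $ (2,1)" using e[of "(1,2)" "(1,1)"] by simp
  have o3: "M $ (1,1) $ (2,1) = - M $ (1,2) $ (2,2)" using e[of "(1,1)" "(2,1)"] by simp
  have o4: "M $ (2,1) $ (1,1) = - M $ (2,2) $ (1,2)" using e[of "(2,1)" "(1,1)"] by simp
  have tr: "qtrace M = 2 * M $ (2,2) $ (2,2) + 2 * M $ (2,1) $ (2,1)"
    by (simp add: qtrace_def sum22 d1 d2)
  show ?thesis
    by (simp add: vec_eq_iff ptrace1_def ptrace2_def mat_def forall_2 sum_2 tr d1 d2 o1 o2 o3 o4)
qed

lemma ptrace_th: assumes "ptrace1 M = mat c" "ptrace2 M = mat d" shows "th M = M"
proof -
  have p1: "(\<Sum>i\<in>UNIV. M $ (i, j) $ (i, j')) = mat c $ j $ j'" for j j'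
  proof -
    have "(\<Sum>i\<in>UNIV. M $ (i, j) $ (i, j')) = ptrace1 M $ j $ j'" by (simp add: ptrace1_def)
    then show ?thesis using assms by simp
  qed
  have p2: "(\<Sum>j\<in>UNIV. M $ (i, j) $ (i', j)) = mat d $ i $ i'" for i i'
  proof -
    have "(\<Sum>j\<in>UNIV. M $ (i, j) $ (i', j)) = ptrace2 M $ i $ i'" by (simp add: ptrace2_def)
    then show ?thesis using assms by simp
  qed
  have o1: "M $ (1,1) $ (1,2) = - M $ (2,1) $ (2,2)" using p1[of 1 2]
    by (simp add: sum_2 mat_def eq_neg_iff_add_eq_0)
  have o2: "M $ (1,2) $ (1,1) = - M $ (2,2) $ (2,1)" using p1[of 2 1]
    by (simp add: sum_2 mat_def eq_neg_iff_add_eq_0)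
  have o3: "M $ (1,1) $ (2,1) = - M $ (1,2) $ (2,2)" using p2[of 1 2]
    by (simp add: sum_2 mat_def eq_neg_iff_add_eq_0)
  have o4: "M $ (2,1) $ (1,1) = - M $ (2,2) $ (1,2)" using p2[of 2 1]
    by (simp add: sum_2 mat_def eq_neg_iff_add_eq_0)
  have a1: "M $ (1,1) $ (1,1) + M $ (2,1) $ (2,1) = M $ (1,2) $ (1,2) + M $ (2,2) $ (2,2)"
    using p1[of 1 1] p1[of 2 2] by (simp add: sum_2 mat_def)
  have a2: "M $ (1,1) $ (1,1) + M $ (1,2) $ (1,2) = M $ (2,1) $ (2,1) + M $ (2,2) $ (2,2)"
    using p2[of 1 1] p2[of 2 2] by (simp add: sum_2 mat_def)
  have "(M $ (1,1) $ (1,1) + M $ (2,1) $ (2,1)) + (M $ (1,1) $ (1,1) + M $ (1,2) $ (1,2))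
      = (M $ (1,2) $ (1,2) + M $ (2,2) $ (2,2)) + (M $ (2,1) $ (2,1) + M $ (2,2) $ (2,2))"
    using a1 a2 by simp
  then have "2 * M $ (1,1) $ (1,1) = 2 * M $ (2,2) $ (2,2)" by (simp add: algebra_simps)
  then have d1: "M $ (1,1) $ (1,1) = M $ (2,2) $ (2,2)" by simp
  have d2: "M $ (1,2) $ (1,2) = M $ (2,1) $ (2,1)" using a1 a2 d1 by simp
  show ?thesis
    by (simp only: vec_eq_iff all22) (simp add: th_def d1 d2 o1 o2 o3 o4)
qed

lemma ketbra_conj: "(U ** ketbra k l ** qadj U) $ x $ y = U $ x $ k * cnj (U $ y $ l)"
proof -
  have 1: "(U ** ketbra k l) $ x $ m = (if m = l then U $ x $ k else 0)" for m
  proof -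
    have "(U ** ketbra k l) $ x $ m = (\<Sum>n\<in>UNIV. if n = k then (if m = l then U $ x $ k else 0) else 0)"
      unfolding matrix_matrix_mult_def ketbra_def vec_lambda_beta by (rule sum.cong) auto
    then show ?thesis by simp
  qed
  have "(U ** ketbra k l ** qadj U) $ x $ y = (\<Sum>m\<in>UNIV. (U ** ketbra k l) $ x $ m * qadj U $ m $ y)"
    unfolding matrix_matrix_mult_def[of "U ** ketbra k l"] vec_lambda_beta ..
  also have "\<dots> = (\<Sum>m\<in>UNIV. if m = l then U $ x $ k * cnj (U $ y $ l) else 0)"
    by (rule sum.cong) (auto simp: 1 qadj_def)
  finally show ?thesis by simp
qed

lemma sum3_swap: "(\<Sum>p\<in>A. \<Sum>q\<in>B. \<Sum>k\<in>C. f p q k) = (\<Sum>k\<in>C. \<Sum>p\<in>A. \<Sum>q\<in>B. f p q k)"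
proof -
  have "(\<Sum>p\<in>A. \<Sum>q\<in>B. \<Sum>k\<in>C. f p q k) = (\<Sum>p\<in>A. \<Sum>k\<in>C. \<Sum>q\<in>B. f p q k)"
    by (rule sum.cong[OF refl], rule sum.swap)
  also have "\<dots> = (\<Sum>k\<in>C. \<Sum>p\<in>A. \<Sum>q\<in>B. f p q k)" by (rule sum.swap)
  finally show ?thesis .
qed

lemma sum3_swap': "(\<Sum>p\<in>A. \<Sum>q\<in>B. \<Sum>k\<in>C. f p q k) = (\<Sum>k\<in>C. \<Sum>q\<in>B. \<Sum>p\<in>A. f p q k)"
proof -
  have "(\<Sum>p\<in>A. \<Sum>q\<in>B. \<Sum>k\<in>C. f p q k) = (\<Sum>q\<in>B. \<Sum>p\<in>A. \<Sum>k\<in>C. f p q k)"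
    by (rule sum.swap)
  also have "\<dots> = (\<Sum>k\<in>C. \<Sum>q\<in>B. \<Sum>p\<in>A. f p q k)" by (rule sum3_swap)
  finally show ?thesis .
qed

lemma gram_psd:
  fixes w :: "'k::finite \<Rightarrow> 'n::finite \<Rightarrow> complex"
  assumes "c \<ge> 0"
  shows "qpsd (\<chi> p q. \<Sum>k\<in>UNIV. of_real c * w k p * cnj (w k q))"
  unfolding qpsd_iff
proof
  fix x :: "complex^'n"
  define z where "z k = (\<Sum>p\<in>UNIV. cnj (x $ p) * w k p)" for k
  have "cin x ((\<chi> p q. \<Sum>k\<in>UNIV. of_real c * w k p * cnj (w k q)) *v x)
      = (\<Sum>p\<in>UNIV. \<Sum>q\<in>UNIV. \<Sum>k\<in>UNIV. of_real c * (cnj (x $ p) * w k p) * (cnj (cnj (x $ q) * w k q)))"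
    by (simp add: cin_def matrix_vector_mult_def sum_distrib_left sum_distrib_right mult_ac)
  also have "\<dots> = (\<Sum>k\<in>UNIV. \<Sum>q\<in>UNIV. \<Sum>p\<in>UNIV. of_real c * (cnj (x $ p) * w k p) * (cnj (cnj (x $ q) * w k q)))"
    by (rule sum3_swap')
  also have "\<dots> = (\<Sum>k\<in>UNIV. of_real c * (z k * cnj (z k)))"
    by (simp add: z_def cnj_sum sum_distrib_left sum_distrib_right mult.assoc)
  also have "\<dots> = of_real (\<Sum>k\<in>UNIV. c * (cmod (z k))^2)"
    by (simp add: mult_cnj_sq)
  finally have "cin x ((\<chi> p q. \<Sum>k\<in>UNIV. of_real c * w k p * cnj (w k q)) *v x) = of_real (\<Sum>k\<in>UNIV. c * (cmod (z k))^2)" .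
  moreover have "0 \<le> (\<Sum>k\<in>UNIV. c * (cmod (z k))^2)" using assms by (intro sum_nonneg) simp
  ultimately show "\<exists>r\<ge>0. cin x ((\<chi> p q. \<Sum>k\<in>UNIV. of_real c * w k p * cnj (w k q)) *v x) = complex_of_real r"
    by blast
qed

lemma cin_axis: "cin (axis p 1) y = y $ p"
proof -
  have "cin (axis p 1) y = (\<Sum>i\<in>UNIV. if i = p then y $ i else 0)"
    unfolding cin_def axis_def vec_lambda_beta by (rule sum.cong) auto
  then show ?thesis by simp
qed

lemma matvec_axis: "(A *v axis p 1) $ i = A $ i $ (p::'n::finite)"
proof -
  have "(A *v axis p 1) $ i = (\<Sum>j\<in>UNIV. if j = p then A $ i $ j else 0)"
    unfolding matrix_vector_mult_def axis_def vec_lambda_beta by (rule sum.cong) auto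
  then show ?thesis by simp
qed

lemma psd_trace0: assumes "qpsd S" "qtrace S = 0" shows "S = 0"
proof -
  define r where "r p = Re (cin (axis p 1) (S *v axis p 1))" for p
  have r: "r p \<ge> 0" "cin (axis p 1) (S *v axis p 1) = of_real (r p)" for p
  proof -
    show "r p \<ge> 0" unfolding r_def by (rule qpsd_Re[OF assms(1)])
    obtain t where "cin (axis p 1) (S *v axis p 1) = of_real t" using qpsd_cin[OF assms(1)] by blast
    then show "cin (axis p 1) (S *v axis p 1) = of_real (r p)" by (simp add: r_def)
  qed
  have d: "S $ p $ p = of_real (r p)" for p
    using r(2)[of p] by (simp add: cin_axis matvec_axis)
  have "qtrace S = (\<Sum>p\<in>UNIV. of_real (r p))" by (simp only: qtrace_def d)
  also have "\<dots> = of_real (\<Sum>p\<in>UNIV. r p)" by (rule of_real_sum[symmetric])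
  finally have "of_real (\<Sum>p\<in>UNIV. r p) = (0::complex)" using assms(2) by simp
  then have "(\<Sum>p\<in>UNIV. r p) = 0" by (simp only: of_real_eq_0_iff)
  then have "r p = 0" for p using r(1) by (simp add: sum_nonneg_eq_0_iff)
  then have "S *v axis p 1 = 0" for p using qpsd_zero[OF assms(1)] r(2) by simp
  then have "S $ i $ p = 0" for i p using matvec_axis[of S p i] by simp
  then show ?thesis by (simp add: vec_eq_iff)
qed

lemma Phi_entry:
  fixes U :: "(2 \<times> 2) op"
  shows "ptrace1 (choi_bip (unitary_channel U)) $ j $ j' =
     (\<Sum>k\<in>UNIV. of_real (1/4) * U $ (snd k, snd j) $ (fst k, fst j) * cnj (U $ (snd k, snd j') $ (fst k, fst j')))"
  by (simp add: ptrace1_def choi_bip_def unitary_channel_def ketbra_conj)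

lemma Phi_eq:
  fixes U :: "(2 \<times> 2) op"
  shows "ptrace1 (choi_bip (unitary_channel U)) = (\<chi> p q. \<Sum>k\<in>UNIV. of_real (1/4) * (\<lambda>k p. U $ (snd k, snd p) $ (fst k, fst p)) k p * cnj ((\<lambda>k p. U $ (snd k, snd p) $ (fst k, fst p)) k q))"
  by (simp add: vec_eq_iff Phi_entry)

lemma Phi_ptrace:
  fixes U :: "(2 \<times> 2) op"
  assumes u: "qunitary U"
  defines "\<Phi> \<equiv> ptrace1 (choi_bip (unitary_channel U))"
  shows "ptrace1 \<Phi> = mat (1/2)" "ptrace2 \<Phi> = mat (1/2)"
proof -
  have u1: "(\<Sum>x\<in>UNIV. U $ p $ x * cnj (U $ q $ x)) = (if p = q then 1 else 0)" for p q
  proof -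
    have "(U ** qadj U) $ p $ q = mat 1 $ p $ q" using u unfolding qunitary_def by simp
    then show ?thesis by (simp add: matrix_matrix_mult_def qadj_def mat_def)
  qed
  have u2: "(\<Sum>x\<in>UNIV. cnj (U $ x $ p) * U $ x $ q) = (if p = q then 1 else 0)" for p q
  proof -
    have "(qadj U ** U) $ p $ q = mat 1 $ p $ q" using u unfolding qunitary_def by simp
    then show ?thesis by (simp add: matrix_matrix_mult_def qadj_def mat_def)
  qed
  have "ptrace1 \<Phi> $ b $ b' = of_real (1/4) * (\<Sum>a\<in>UNIV. \<Sum>x\<in>UNIV. U $ (a,b) $ x * cnj (U $ (a,b') $ x))" for b b'
  proof -
    have "ptrace1 \<Phi> $ b $ b' = (\<Sum>rb\<in>UNIV. \<Phi> $ (rb,b) $ (rb,b'))" by (simp add: ptrace1_def)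
    also have "\<dots> = of_real (1/4) * (\<Sum>a\<in>UNIV. \<Sum>x\<in>UNIV. U $ (a,b) $ x * cnj (U $ (a,b') $ x))"
      unfolding \<Phi>_def Phi_entry by (simp add: sum22 sum_2 algebra_simps)
    finally show ?thesis .
  qed
  also have "\<dots> b b' = (if b = b' then 1/2 else 0)" for b b'
    by (simp add: u1 sum_2)
  finally show "ptrace1 \<Phi> = mat (1/2)" by (simp add: vec_eq_iff mat_def)
  have "ptrace2 \<Phi> $ r $ r' = of_real (1/4) * (\<Sum>a\<in>UNIV. \<Sum>x\<in>UNIV. cnj (U $ x $ (a,r')) * U $ x $ (a,r))" for r r'
  proof -
    have "ptrace2 \<Phi> $ r $ r' = (\<Sum>b\<in>UNIV. \<Phi> $ (r,b) $ (r',b))" by (simp add: ptrace2_def)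
    also have "\<dots> = of_real (1/4) * (\<Sum>a\<in>UNIV. \<Sum>x\<in>UNIV. cnj (U $ x $ (a,r')) * U $ x $ (a,r))"
      unfolding \<Phi>_def Phi_entry by (simp add: sum22 sum_2 algebra_simps)
    finally show ?thesis .
  qed
  also have "\<dots> r r' = (if r = r' then 1/2 else 0)" for r r'
    by (simp add: u2 sum_2)
  finally show "ptrace2 \<Phi> = mat (1/2)" by (simp add: vec_eq_iff mat_def)
qed

theorem lemma9:
  fixes U :: "(2 \<times> 2) op"
  assumes "qunitary U"
  defines "\<Phi>B \<equiv> ptrace1 (choi_bip (unitary_channel U))"
  defines "\<rho> \<equiv> (\<chi> i j. qsqrt \<Phi>B $ i $ j / qtrace (qsqrt \<Phi>B))"
  shows "ptrace2 \<rho> = mat (1/2) \<and> ptrace1 \<rho> = mat (1/2)"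
proof -
  have psd: "qpsd \<Phi>B" unfolding \<Phi>B_def Phi_eq by (rule gram_psd) simp
  have pt: "ptrace1 \<Phi>B = mat (1/2)" "ptrace2 \<Phi>B = mat (1/2)"
    using Phi_ptrace[OF assms(1)] unfolding \<Phi>B_def by auto
  define S where "S = qsqrt \<Phi>B"
  note sq = qsqrt_props[OF psd, folded S_def]
  have thPhi: "th \<Phi>B = \<Phi>B" by (rule ptrace_th[OF pt])
  have "th S = S"
  proof -
    have "qpsd (th S)" by (rule th_psd[OF sq(1)])
    moreover have "th S ** th S = \<Phi>B" using th_mult[of S S] sq(2) thPhi by simp
    ultimately show ?thesis using sq(3) by blast
  qed
  then have ptS: "ptrace1 S = mat (qtrace S / 2)" "ptrace2 S = mat (qtrace S / 2)"
    using th_ptrace by blast+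
  have t0: "qtrace S \<noteq> 0"
  proof
    assume "qtrace S = 0"
    then have "S = 0" by (rule psd_trace0[OF sq(1)])
    then have "\<Phi>B = 0 ** 0" using sq(2) by simp
    also have "(0::(2\<times>2) op) ** 0 = 0" by (simp add: matrix_matrix_mult_def vec_eq_iff)
    finally have "\<Phi>B = 0" .
    then have "ptrace2 \<Phi>B $ 1 $ 1 = 0" by (simp add: ptrace2_def)
    then show False using pt(2) by (simp add: mat_def)
  qed
  have r1: "ptrace1 \<rho> = (\<chi> i j. ptrace1 S $ i $ j / qtrace S)"
    by (simp add: \<rho>_def S_def ptrace1_def vec_eq_iff sum_divide_distrib)
  have r2: "ptrace2 \<rho> = (\<chi> i j. ptrace2 S $ i $ j / qtrace S)"
    by (simp add: \<rho>_def S_def ptrace2_def vec_eq_iff sum_divide_distrib)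
  show ?thesis using t0 by (simp add: r1 r2 ptS vec_eq_iff mat_def)
qed

end
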